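(* A ring $R$ is feckly clean if and only if $J\text{-spec}(R)$ is strongly zero-dimensional.
   Context: Rings are associative with identity, not necessarily commutative; $J(R)$ is the Jacobson radical. An element $u\in R$ is full if $RuR=R$. An element $a\in R$ is feckly clean if there exist $e\in R$ and a full element $u\in R$ with $a=e+u$ and $eR(1-e)\subseteq J(R)$; $R$ is feckly clean if every element is feckly clean. $J\text{-spec}(R)$ is the set of all prime (two-sided) ideals $P$ of $R$ with $J(R)\subseteq P$, topologized so that the closed sets are exactly the sets $W(I)=\{P\in J\text{-spec}(R): I\subseteq P\}$ for ideals $I$ of $R$. A topological space $X$ is strongly zero-dimensional if for any two disjoint closed sets $A,B\subseteq X$ there exist disjoint clopen sets $C_1,C_2$ with $A\subseteq C_1$ and $B\subseteq C_2$. *)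

theory Defs
  imports Main
begin

definition left_ideal :: "'a::ring_1 set \<Rightarrow> bool" where
  "left_ideal I \<longleftrightarrow> 0 \<in> I \<and> (\<forall>x\<in>I. \<forall>y\<in>I. x + y \<in> I) \<and> (\<forall>x\<in>I. - x \<in> I)
     \<and> (\<forall>r. \<forall>x\<in>I. r * x \<in> I)"

definition maximal_left_ideal :: "'a::ring_1 set \<Rightarrow> bool" where
  "maximal_left_ideal M \<longleftrightarrow> left_ideal M \<and> M \<noteq> UNIV \<and>
     (\<forall>N. left_ideal N \<and> M \<subseteq> N \<longrightarrow> N = M \<or> N = UNIV)"

definition jacobson :: "'a::ring_1 set" where
  "jacobson = \<Inter>{M. maximal_left_ideal M}"

definition ideal :: "'a::ring_1 set \<Rightarrow> bool" where
  "ideal I \<longleftrightarrow> 0 \<in> I \<and> (\<forall>x\<in>I. \<forall>y\<in>I. x + y \<in> I) \<and> (\<forall>x\<in>I. - x \<in> I)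
     \<and> (\<forall>r. \<forall>x\<in>I. r * x \<in> I \<and> x * r \<in> I)"

definition gen_ideal :: "'a::ring_1 set \<Rightarrow> 'a set" where
  "gen_ideal S = \<Inter>{I. ideal I \<and> S \<subseteq> I}"

definition full :: "'a::ring_1 \<Rightarrow> bool" where
  "full u \<longleftrightarrow> gen_ideal {u} = UNIV"

definition feckly_clean_elem :: "'a::ring_1 \<Rightarrow> bool" where
  "feckly_clean_elem a \<longleftrightarrow> (\<exists>e u. full u \<and> a = e + u \<and> (\<forall>r. e * r * (1 - e) \<in> jacobson))"

definition feckly_clean :: "'a::ring_1 itself \<Rightarrow> bool" where
  "feckly_clean (_ :: 'a itself) \<longleftrightarrow> (\<forall>a :: 'a. feckly_clean_elem a)"

definition prime_ideal :: "'a::ring_1 set \<Rightarrow> bool" where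
  "prime_ideal P \<longleftrightarrow> ideal P \<and> P \<noteq> UNIV \<and>
     (\<forall>A B. ideal A \<and> ideal B \<and> (\<forall>a\<in>A. \<forall>b\<in>B. a * b \<in> P) \<longrightarrow> A \<subseteq> P \<or> B \<subseteq> P)"

definition J_spec :: "'a::ring_1 set set" where
  "J_spec = {P. prime_ideal P \<and> jacobson \<subseteq> P}"

definition W :: "'a::ring_1 set \<Rightarrow> 'a set set" where
  "W I = {P \<in> J_spec. I \<subseteq> P}"

definition J_closed :: "'a::ring_1 set set \<Rightarrow> bool" where
  "J_closed S \<longleftrightarrow> (\<exists>I. ideal I \<and> S = W I)"

definition J_clopen :: "'a::ring_1 set set \<Rightarrow> bool" where
  "J_clopen C \<longleftrightarrow> C \<subseteq> J_spec \<and> J_closed C \<and> J_closed (J_spec - C)"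

definition J_spec_strongly_zero_dim :: "'a::ring_1 itself \<Rightarrow> bool" where
  "J_spec_strongly_zero_dim (_ :: 'a itself) \<longleftrightarrow>
     (\<forall>A B :: 'a set set. J_closed A \<and> J_closed B \<and> A \<inter> B = {} \<longrightarrow>
        (\<exists>C1 C2. J_clopen C1 \<and> J_clopen C2 \<and> C1 \<inter> C2 = {} \<and> A \<subseteq> C1 \<and> B \<subseteq> C2))"

end

theory Submission
  imports Defs
begin

lemma ideal_left_ideal: "ideal I \<Longrightarrow> left_ideal I"
  unfolding ideal_def left_ideal_def by blast

lemma li_add: "left_ideal I \<Longrightarrow> x \<in> I \<Longrightarrow> y \<in> I \<Longrightarrow> x + y \<in> I"
  unfolding left_ideal_def by blast
lemma li_neg: "left_ideal I \<Longrightarrow> x \<in> I \<Longrightarrow> - x \<in> I"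
  unfolding left_ideal_def by blast
lemma li_mult: "left_ideal I \<Longrightarrow> x \<in> I \<Longrightarrow> r * x \<in> I"
  unfolding left_ideal_def by blast
lemma li_zero: "left_ideal I \<Longrightarrow> 0 \<in> I"
  unfolding left_ideal_def by blast
lemma li_diff: "left_ideal I \<Longrightarrow> x \<in> I \<Longrightarrow> y \<in> I \<Longrightarrow> x - y \<in> I"
  using li_add li_neg by (metis diff_conv_add_uminus)
lemma li_one: "left_ideal I \<Longrightarrow> 1 \<in> I \<Longrightarrow> I = UNIV"
  using li_mult by (metis UNIV_eq_I mult.right_neutral)
lemma id_multR: "ideal I \<Longrightarrow> x \<in> I \<Longrightarrow> x * r \<in> I"
  unfolding ideal_def by blast
lemma id_one: "ideal I \<Longrightarrow> 1 \<in> I \<Longrightarrow> I = UNIV"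
  using ideal_left_ideal li_one by blast

lemma gen_mem: "x \<in> gen_ideal S \<longleftrightarrow> (\<forall>I. ideal I \<and> S \<subseteq> I \<longrightarrow> x \<in> I)"
  unfolding gen_ideal_def by blast

lemma gen_ideal_ideal: "ideal (gen_ideal S)"
proof -
  have a: "0 \<in> gen_ideal S" unfolding gen_mem ideal_def by blast
  have b: "\<And>x y. x \<in> gen_ideal S \<Longrightarrow> y \<in> gen_ideal S \<Longrightarrow> x + y \<in> gen_ideal S"
    unfolding gen_mem ideal_def by blast
  have c: "\<And>x. x \<in> gen_ideal S \<Longrightarrow> - x \<in> gen_ideal S"
    unfolding gen_mem ideal_def by blast
  have d: "\<And>x r. x \<in> gen_ideal S \<Longrightarrow> r * x \<in> gen_ideal S \<and> x * r \<in> gen_ideal S"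
    unfolding gen_mem ideal_def by blast
  show ?thesis unfolding ideal_def[of "gen_ideal S"] using a b c d by blast
qed

lemma gen_ideal_sub: "ideal I \<Longrightarrow> S \<subseteq> I \<Longrightarrow> gen_ideal S \<subseteq> I"
  unfolding gen_ideal_def by blast
lemma gen_ideal_incl: "S \<subseteq> gen_ideal S"
  unfolding gen_ideal_def by blast

lemma Jspec_ideal: "P \<in> J_spec \<Longrightarrow> ideal P"
  unfolding J_spec_def prime_ideal_def by blast
lemma Jspec_ne: "P \<in> J_spec \<Longrightarrow> P \<noteq> UNIV"
  unfolding J_spec_def prime_ideal_def by blast
lemma Jspec_J: "P \<in> J_spec \<Longrightarrow> jacobson \<subseteq> P"
  unfolding J_spec_def by blast
lemma Jspec_one: "P \<in> J_spec \<Longrightarrow> 1 \<notin> P"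
  using Jspec_ideal Jspec_ne id_one by blast

lemma closed_single: "J_closed {P \<in> J_spec. a \<in> P}"
proof -
  have "{P \<in> J_spec. a \<in> P} = W (gen_ideal {a})"
  proof (rule set_eqI)
    fix P show "P \<in> {P \<in> J_spec. a \<in> P} \<longleftrightarrow> P \<in> W (gen_ideal {a})"
      unfolding W_def using gen_ideal_sub[of P "{a}"] gen_ideal_incl[of "{a}"] Jspec_ideal[of P] by auto
  qed
  then show ?thesis unfolding J_closed_def using gen_ideal_ideal by blast
qed

lemma full_notin: "full u \<Longrightarrow> P \<in> J_spec \<Longrightarrow> u \<notin> P"
proof
  assume "full u" "P \<in> J_spec" "u \<in> P"
  then have "gen_ideal {u} \<subseteq> P" using gen_ideal_sub Jspec_ideal by blast
  then show False using \<open>full u\<close> \<open>P \<in> J_spec\<close> Jspec_ne unfolding full_def by blast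
qed

lemma sum_ideal: assumes "ideal I" "ideal K"
  shows "ideal {x + y |x y. x \<in> I \<and> y \<in> K}"
proof -
  let ?S = "{x + y |x y. x \<in> I \<and> y \<in> K}"
  have "0 \<in> ?S" using assms unfolding ideal_def by force
  moreover have "\<forall>a\<in>?S. \<forall>b\<in>?S. a + b \<in> ?S"
  proof (intro ballI)
    fix a b assume "a \<in> ?S" "b \<in> ?S"
    then obtain x y x' y' where "a = x + y" "b = x' + y'" "x \<in> I" "y \<in> K" "x' \<in> I" "y' \<in> K" by blast
    moreover have "a + b = (x + x') + (y + y')" using calculation by (simp add: algebra_simps)
    ultimately show "a + b \<in> ?S" using assms unfolding ideal_def by blast
  qed
  moreover have "\<forall>a\<in>?S. - a \<in> ?S"
  proof (intro ballI)
    fix a assume "a \<in> ?S"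
    then obtain x y where "a = x + y" "x \<in> I" "y \<in> K" by blast
    moreover have "- a = (- x) + (- y)" using calculation by (simp add: algebra_simps)
    ultimately show "- a \<in> ?S" using assms unfolding ideal_def by blast
  qed
  moreover have "\<forall>r. \<forall>a\<in>?S. r * a \<in> ?S \<and> a * r \<in> ?S"
  proof (intro allI ballI)
    fix r a assume "a \<in> ?S"
    then obtain x y where "a = x + y" "x \<in> I" "y \<in> K" by blast
    moreover have "r * a = r * x + r * y" "a * r = x * r + y * r" using calculation by (simp_all add: algebra_simps)
    ultimately show "r * a \<in> ?S \<and> a * r \<in> ?S" using assms unfolding ideal_def by blast
  qed
  ultimately show ?thesis unfolding ideal_def by blast
qed

lemma prime_elem:
  assumes P: "prime_ideal P" and ab: "\<forall>r. a * r * b \<in> P"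
  shows "a \<in> P \<or> b \<in> P"
proof -
  have IP: "ideal P" using P unfolding prime_ideal_def by blast
  have P0: "0 \<in> P" and Padd: "\<And>x y. x \<in> P \<Longrightarrow> y \<in> P \<Longrightarrow> x + y \<in> P"
    and Pneg: "\<And>x. x \<in> P \<Longrightarrow> - x \<in> P"
    and PL: "\<And>x r. x \<in> P \<Longrightarrow> r * x \<in> P" and PR: "\<And>x r. x \<in> P \<Longrightarrow> x * r \<in> P"
    using IP unfolding ideal_def by blast+
  define A where "A = {x. \<forall>r. x * r * b \<in> P}"
  define B where "B = {y. \<forall>x\<in>A. \<forall>r. x * r * y \<in> P}"
  have iA: "ideal A" unfolding ideal_def
  proof (intro conjI ballI allI)
    show "0 \<in> A" unfolding A_def using P0 by simp
  next
    fix x y assume "x \<in> A" "y \<in> A"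
    then show "x + y \<in> A" unfolding A_def using Padd by (simp add: algebra_simps)
  next
    fix x assume "x \<in> A"
    then show "- x \<in> A" unfolding A_def using Pneg by simp
  next
    fix r x assume h: "x \<in> A"
    show "r * x \<in> A" unfolding A_def mem_Collect_eq
    proof (intro allI)
      fix s show "r * x * s * b \<in> P" using h PL unfolding A_def by (simp add: mult.assoc)
    qed
    show "x * r \<in> A" unfolding A_def mem_Collect_eq
    proof (intro allI)
      fix s have "x * (r * s) * b \<in> P" using h unfolding A_def by blast
      then show "x * r * s * b \<in> P" by (simp add: mult.assoc)
    qed
  qed
  have iB: "ideal B" unfolding ideal_def
  proof (intro conjI ballI allI)
    show "0 \<in> B" unfolding B_def using P0 by simp
  next
    fix x y assume "x \<in> B" "y \<in> B"
    then show "x + y \<in> B" unfolding B_def using Padd by (simp add: algebra_simps)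
  next
    fix x assume "x \<in> B"
    then show "- x \<in> B" unfolding B_def using Pneg by simp
  next
    fix r x assume h: "x \<in> B"
    show "r * x \<in> B" unfolding B_def mem_Collect_eq
    proof (intro allI ballI)
      fix z s assume "z \<in> A" then have "z * (s * r) * x \<in> P" using h unfolding B_def by blast
      then show "z * s * (r * x) \<in> P" by (simp add: mult.assoc)
    qed
    show "x * r \<in> B" unfolding B_def mem_Collect_eq
    proof (intro allI ballI)
      fix z s assume "z \<in> A" then have "z * s * x \<in> P" using h unfolding B_def by blast
      then have "z * s * x * r \<in> P" by (rule PR)
      then show "z * s * (x * r) \<in> P" by (simp add: mult.assoc)
    qed
  qed
  have "\<forall>x\<in>A. \<forall>y\<in>B. x * y \<in> P"
  proof (intro ballI)
    fix x y assume "x \<in> A" "y \<in> B"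
    then have "x * 1 * y \<in> P" unfolding B_def by blast
    then show "x * y \<in> P" by simp
  qed
  then have "A \<subseteq> P \<or> B \<subseteq> P" using P iA iB unfolding prime_ideal_def by blast
  moreover have "a \<in> A" using ab A_def by simp
  moreover have "b \<in> B" unfolding B_def A_def by simp
  ultimately show ?thesis by blast
qed

lemma max_gen:
  assumes N: "maximal_left_ideal N" and b: "b \<notin> N"
  shows "\<exists>m\<in>N. \<exists>s. r = m + s * b"
proof -
  have LN: "left_ideal N" using N unfolding maximal_left_ideal_def by blast
  define Q where "Q = {m + s * b |m s. m \<in> N}"
  have LQ: "left_ideal Q" unfolding left_ideal_def
  proof (intro conjI ballI allI)
    have "0 = 0 + 0 * b" by simp
    then show "0 \<in> Q" unfolding Q_def using li_zero[OF LN] by blast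
  next
    fix x y assume "x \<in> Q" "y \<in> Q"
    then obtain m s m' s' where "x = m + s * b" "y = m' + s' * b" "m \<in> N" "m' \<in> N" unfolding Q_def by blast
    moreover have "x + y = (m + m') + (s + s') * b" using calculation by (simp add: algebra_simps)
    ultimately show "x + y \<in> Q" unfolding Q_def using li_add[OF LN] by blast
  next
    fix x assume "x \<in> Q"
    then obtain m s where "x = m + s * b" "m \<in> N" unfolding Q_def by blast
    moreover have "- x = (- m) + (- s) * b" using calculation by (simp add: algebra_simps)
    ultimately show "- x \<in> Q" unfolding Q_def using li_neg[OF LN] by blast
  next
    fix r x assume "x \<in> Q"
    then obtain m s where "x = m + s * b" "m \<in> N" unfolding Q_def by blast
    moreover have "r * x = r * m + (r * s) * b" using calculation by (simp add: algebra_simps)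
    ultimately show "r * x \<in> Q" unfolding Q_def using li_mult[OF LN] by blast
  qed
  have "N \<subseteq> Q"
  proof
    fix m assume "m \<in> N"
    moreover have "m = m + 0 * b" by simp
    ultimately show "m \<in> Q" unfolding Q_def by blast
  qed
  moreover have "b \<in> Q"
  proof -
    have "b = 0 + 1 * b" by simp
    then show ?thesis unfolding Q_def using li_zero[OF LN] by blast
  qed
  ultimately have "Q = UNIV" using N LQ b unfolding maximal_left_ideal_def by blast
  then have "r \<in> Q" by simp
  then show ?thesis unfolding Q_def by blast
qed

lemma jac_colon:
  assumes N: "maximal_left_ideal N" and x: "x \<in> jacobson"
  shows "x * t \<in> N"
proof -
  have LN: "left_ideal N" using N unfolding maximal_left_ideal_def by blast
  define C where "C = {r. r * t \<in> N}"
  show ?thesis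
  proof (cases "C = UNIV")
    case True then show ?thesis unfolding C_def by blast
  next
    case False
    have LC: "left_ideal C" unfolding left_ideal_def
    proof (intro conjI ballI allI)
      show "0 \<in> C" unfolding C_def using li_zero[OF LN] by simp
    next
      fix x y assume "x \<in> C" "y \<in> C"
      then have "x * t + y * t \<in> N" unfolding C_def using li_add[OF LN] by blast
      then show "x + y \<in> C" unfolding C_def by (simp add: distrib_right)
    next
      fix x assume "x \<in> C"
      then have "- (x * t) \<in> N" unfolding C_def using li_neg[OF LN] by blast
      then show "- x \<in> C" unfolding C_def by simp
    next
      fix r x assume "x \<in> C"
      then have "r * (x * t) \<in> N" unfolding C_def using li_mult[OF LN] by blast
      then show "r * x \<in> C" unfolding C_def by (simp add: mult.assoc)
    qed
    have tN: "t \<notin> N"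
    proof
      assume "t \<in> N"
      then have "C = UNIV" unfolding C_def using li_mult[OF LN] by (simp add: mult.assoc)
      then show False using False by blast
    qed
    have "maximal_left_ideal C" unfolding maximal_left_ideal_def
    proof (intro conjI allI impI LC False)
      fix N' assume h: "left_ideal N' \<and> C \<subseteq> N'"
      show "N' = C \<or> N' = UNIV"
      proof (cases "N' = C")
        case True then show ?thesis by blast
      next
        case False
        then obtain n where n: "n \<in> N'" "n \<notin> C" using h by blast
        then have nt: "n * t \<notin> N" unfolding C_def by blast
        have "r \<in> N'" for r
        proof -
          obtain m s where ms: "m \<in> N" "r * t = m + s * (n * t)" using max_gen[OF N nt] by blast
          have "(r - s * n) * t = m" using ms(2) by (simp add: algebra_simps)
          then have "r - s * n \<in> C" unfolding C_def using ms(1) by simp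
          then have "r - s * n \<in> N'" using h by blast
          moreover have "s * n \<in> N'" using li_mult h n(1) by blast
          ultimately have "(r - s * n) + s * n \<in> N'" using li_add h by blast
          then show ?thesis by simp
        qed
        then show ?thesis by blast
      qed
    qed
    then have "jacobson \<subseteq> C" unfolding jacobson_def by blast
    then show ?thesis using x unfolding C_def by blast
  qed
qed

definition pid :: "'a::ring_1 set \<Rightarrow> 'a set" where
  "pid N = {r. \<forall>t. r * t \<in> N}"

lemma pid_Jspec:
  assumes N: "maximal_left_ideal N"
  shows "pid N \<in> J_spec"
proof -
  have LN: "left_ideal N" using N unfolding maximal_left_ideal_def by blast
  have oneN: "1 \<notin> N" using N li_one[OF LN] unfolding maximal_left_ideal_def by blast
  have I: "ideal (pid N)" unfolding ideal_def
  proof (intro conjI ballI allI)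
    show "0 \<in> pid N" unfolding pid_def using li_zero[OF LN] by simp
  next
    fix x y assume "x \<in> pid N" "y \<in> pid N"
    then have "\<And>t. x * t + y * t \<in> N" unfolding pid_def using li_add[OF LN] by blast
    then show "x + y \<in> pid N" unfolding pid_def by (simp add: distrib_right)
  next
    fix x assume "x \<in> pid N"
    then have "\<And>t. - (x * t) \<in> N" unfolding pid_def using li_neg[OF LN] by blast
    then show "- x \<in> pid N" unfolding pid_def by simp
  next
    fix r x assume "x \<in> pid N"
    then have "\<And>t. r * (x * t) \<in> N" unfolding pid_def using li_mult[OF LN] by blast
    then show "r * x \<in> pid N" unfolding pid_def by (simp add: mult.assoc)
  next
    fix r x assume "x \<in> pid N"
    then have "\<And>t. x * (r * t) \<in> N" unfolding pid_def by blast
    then show "x * r \<in> pid N" unfolding pid_def by (simp add: mult.assoc)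
  qed
  have NU: "pid N \<noteq> UNIV"
  proof
    assume "pid N = UNIV"
    then have "1 * 1 \<in> N" unfolding pid_def by blast
    then show False using oneN by simp
  qed
  have pr: "A \<subseteq> pid N \<or> B \<subseteq> pid N"
    if iA: "ideal A" and iB: "ideal B" and AB: "\<forall>a\<in>A. \<forall>b\<in>B. a * b \<in> pid N" for A B
  proof (rule ccontr)
    assume "\<not> (A \<subseteq> pid N \<or> B \<subseteq> pid N)"
    then obtain a b0 where a: "a \<in> A" "a \<notin> pid N" and b0: "b0 \<in> B" "b0 \<notin> pid N" by blast
    from b0(2) obtain t0 where t0: "b0 * t0 \<notin> N" unfolding pid_def by blast
    have b'B: "b0 * t0 \<in> B" using iB b0(1) id_multR by blast
    from a(2) obtain t where t: "a * t \<notin> N" unfolding pid_def by blast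
    obtain m s where ms: "m \<in> N" "t = m + s * (b0 * t0)" using max_gen[OF N t0] by blast
    have "a * t = a * m + (a * s) * (b0 * t0)" using ms(2) by (simp add: algebra_simps)
    moreover have "a * m \<in> N" using li_mult[OF LN ms(1)] .
    moreover have "(a * s) * (b0 * t0) \<in> pid N" using AB id_multR[OF iA a(1)] b'B by blast
    then have "(a * s) * (b0 * t0) * 1 \<in> N" unfolding pid_def by blast
    ultimately have "a * t \<in> N" using li_add[OF LN] by simp
    then show False using t by blast
  qed
  have J: "jacobson \<subseteq> pid N" unfolding pid_def using jac_colon[OF N] by blast
  show ?thesis unfolding J_spec_def prime_ideal_def using I NU pr J by blast
qed

lemma pid_sub: "ideal X \<Longrightarrow> X \<subseteq> N \<Longrightarrow> X \<subseteq> pid N"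
proof
  fix x assume "ideal X" "X \<subseteq> N" "x \<in> X"
  then have "\<And>t. x * t \<in> N" using id_multR by blast
  then show "x \<in> pid N" unfolding pid_def by blast
qed

lemma exists_max:
  assumes X: "ideal X" and one: "1 \<notin> X"
  shows "\<exists>N. maximal_left_ideal N \<and> X \<subseteq> N"
proof -
  define S where "S = {L. left_ideal L \<and> X \<subseteq> L \<and> 1 \<notin> L}"
  have "S \<noteq> {}" unfolding S_def using X one ideal_left_ideal by blast
  moreover have "\<Union>C \<in> S" if C: "C \<noteq> {}" "subset.chain S C" for C
  proof -
    have CS: "C \<subseteq> S" and ch: "\<forall>X\<in>C. \<forall>Y\<in>C. X \<subseteq> Y \<or> Y \<subseteq> X"
      using C(2) unfolding subset_chain_def by blast+
    have L: "\<And>L. L \<in> C \<Longrightarrow> left_ideal L" using CS unfolding S_def by blast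
    have "left_ideal (\<Union>C)" unfolding left_ideal_def
    proof (intro conjI ballI allI)
      show "0 \<in> \<Union>C" using C(1) L li_zero by blast
    next
      fix x y assume "x \<in> \<Union>C" "y \<in> \<Union>C"
      then obtain Lx Ly where "Lx \<in> C" "Ly \<in> C" "x \<in> Lx" "y \<in> Ly" by blast
      moreover from this have "Lx \<subseteq> Ly \<or> Ly \<subseteq> Lx" using ch by blast
      ultimately show "x + y \<in> \<Union>C" using L li_add by blast
    next
      fix x assume "x \<in> \<Union>C"
      then show "- x \<in> \<Union>C" using L li_neg by blast
    next
      fix r x assume "x \<in> \<Union>C"
      then show "r * x \<in> \<Union>C" using L li_mult by blast
    qed
    moreover have "X \<subseteq> \<Union>C" using C(1) CS unfolding S_def by blast
    moreover have "1 \<notin> \<Union>C" using CS unfolding S_def by blast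
    ultimately show ?thesis unfolding S_def by blast
  qed
  ultimately obtain M where M: "M \<in> S" "\<forall>Y\<in>S. M \<subseteq> Y \<longrightarrow> Y = M"
    using subset_Zorn_nonempty[of S] by blast
  have "maximal_left_ideal M" unfolding maximal_left_ideal_def
  proof (intro conjI allI impI)
    show "left_ideal M" using M(1) unfolding S_def by blast
    show "M \<noteq> UNIV" using M(1) unfolding S_def by blast
  next
    fix N' assume h: "left_ideal N' \<and> M \<subseteq> N'"
    show "N' = M \<or> N' = UNIV"
    proof (cases "1 \<in> N'")
      case True then show ?thesis using h li_one by blast
    next
      case False
      then have "N' \<in> S" using h M(1) unfolding S_def by blast
      then show ?thesis using M(2) h by blast
    qed
  qed
  then show ?thesis using M(1) unfolding S_def by blast
qed

lemma KL: "ideal X \<Longrightarrow> 1 \<notin> X \<Longrightarrow> \<exists>P\<in>J_spec. X \<subseteq> P"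
proof -
  assume X: "ideal X" "1 \<notin> X"
  obtain N where N: "maximal_left_ideal N" "X \<subseteq> N" using exists_max[OF X] by blast
  have "pid N \<in> J_spec" by (rule pid_Jspec[OF N(1)])
  moreover have "X \<subseteq> pid N" by (rule pid_sub[OF X(1) N(2)])
  ultimately show ?thesis by blast
qed

lemma JL: "(\<forall>P\<in>J_spec. x \<in> P) \<Longrightarrow> x \<in> jacobson"
proof (rule ccontr)
  assume h: "\<forall>P\<in>J_spec. x \<in> P" "x \<notin> jacobson"
  then obtain N where N: "maximal_left_ideal N" "x \<notin> N" unfolding jacobson_def by blast
  have "x \<notin> pid N"
  proof
    assume "x \<in> pid N"
    then have "x * 1 \<in> N" unfolding pid_def by blast
    then show False using N(2) by simp
  qed
  moreover have "pid N \<in> J_spec" by (rule pid_Jspec[OF N(1)])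
  ultimately show False using h(1) by blast
qed

lemma Jspec_li: "P \<in> J_spec \<Longrightarrow> left_ideal P"
  using Jspec_ideal ideal_left_ideal by blast

lemma sum_one_ideal:
  assumes I: "ideal I" and K: "ideal K" and disj: "\<forall>P\<in>J_spec. \<not> (I \<subseteq> P \<and> K \<subseteq> P)"
  shows "\<exists>x y. x \<in> I \<and> y \<in> K \<and> 1 = x + y"
proof (rule ccontr)
  assume nn: "\<not> ?thesis"
  let ?X = "{x + y |x y. x \<in> I \<and> y \<in> K}"
  have "1 \<notin> ?X" using nn by auto
  then obtain P where P: "P \<in> J_spec" "?X \<subseteq> P" using KL[OF sum_ideal[OF I K]] by blast
  have "I \<subseteq> P"
  proof
    fix x assume "x \<in> I"
    moreover have "0 \<in> K" using K unfolding ideal_def by blast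
    moreover have "x = x + 0" by simp
    ultimately have "x \<in> ?X" by blast
    then show "x \<in> P" using P by blast
  qed
  moreover have "K \<subseteq> P"
  proof
    fix y assume "y \<in> K"
    moreover have "0 \<in> I" using I unfolding ideal_def by blast
    moreover have "y = 0 + y" by simp
    ultimately have "y \<in> ?X" by blast
    then show "y \<in> P" using P by blast
  qed
  ultimately show False using disj P(1) by blast
qed

lemma fwd:
  assumes fc: "feckly_clean TYPE('a::ring_1)"
  shows "J_spec_strongly_zero_dim TYPE('a)"
  unfolding J_spec_strongly_zero_dim_def
proof (intro allI impI)
  fix A B :: "'a set set"
  assume h: "J_closed A \<and> J_closed B \<and> A \<inter> B = {}"
  then obtain I K where I: "ideal I" "A = W I" and K: "ideal K" "B = W K"
    unfolding J_closed_def by blast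
  have "\<forall>P\<in>J_spec. \<not> (I \<subseteq> P \<and> K \<subseteq> P)"
    using h I K unfolding W_def by blast
  then obtain x y where xy: "x \<in> I" "y \<in> K" "1 = x + y" using sum_one_ideal[OF I(1) K(1)] by blast
  have "feckly_clean_elem x" using fc unfolding feckly_clean_def by blast
  then obtain e u where eu: "full u" "x = e + u" "\<forall>r. e * r * (1 - e) \<in> jacobson"
    unfolding feckly_clean_elem_def by blast
  define C1 where "C1 = {P \<in> J_spec. 1 - e \<in> P}"
  define C2 where "C2 = {P \<in> J_spec. e \<in> P}"
  have split: "e \<in> P \<or> 1 - e \<in> P" if P: "P \<in> J_spec" for P
  proof -
    have "\<forall>r. e * r * (1 - e) \<in> P" using eu(3) Jspec_J[OF P] by blast
    then show ?thesis using prime_elem P unfolding J_spec_def by blast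
  qed
  have notboth: "\<not> (e \<in> P \<and> 1 - e \<in> P)" if P: "P \<in> J_spec" for P
  proof
    assume "e \<in> P \<and> 1 - e \<in> P"
    then have "e + (1 - e) \<in> P" using li_add[OF Jspec_li[OF P]] by blast
    then show False using Jspec_one[OF P] by simp
  qed
  have c1: "J_spec - C1 = C2" unfolding C1_def C2_def using split notboth by blast
  have c2: "J_spec - C2 = C1" unfolding C1_def C2_def using split notboth by blast
  have "J_clopen C1" unfolding J_clopen_def
  proof (intro conjI)
    show "C1 \<subseteq> J_spec" unfolding C1_def by blast
    show "J_closed C1" unfolding C1_def by (rule closed_single)
    show "J_closed (J_spec - C1)" unfolding c1 C2_def by (rule closed_single)
  qed
  moreover have "J_clopen C2" unfolding J_clopen_def
  proof (intro conjI)
    show "C2 \<subseteq> J_spec" unfolding C2_def by blast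
    show "J_closed C2" unfolding C2_def by (rule closed_single)
    show "J_closed (J_spec - C2)" unfolding c2 C1_def by (rule closed_single)
  qed
  moreover have "C1 \<inter> C2 = {}" unfolding C1_def C2_def using notboth by blast
  moreover have "A \<subseteq> C1"
  proof
    fix P assume "P \<in> A"
    then have P: "P \<in> J_spec" "I \<subseteq> P" using I unfolding W_def by blast+
    have xP: "x \<in> P" using P xy by blast
    show "P \<in> C1"
    proof (rule ccontr)
      assume "P \<notin> C1"
      then have "e \<in> P" using split P(1) unfolding C1_def by blast
      then have "x - e \<in> P" using li_diff[OF Jspec_li[OF P(1)] xP] by blast
      moreover have "x - e = u" using eu(2) by simp
      ultimately show False using full_notin[OF eu(1) P(1)] by simp
    qed
  qed
  moreover have "B \<subseteq> C2"
  proof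
    fix P assume "P \<in> B"
    then have P: "P \<in> J_spec" "K \<subseteq> P" using K unfolding W_def by blast+
    have yP: "y \<in> P" using P xy by blast
    show "P \<in> C2"
    proof (rule ccontr)
      assume "P \<notin> C2"
      then have "1 - e \<in> P" using split P(1) unfolding C2_def by blast
      then have "(1 - e) - y \<in> P" using li_diff[OF Jspec_li[OF P(1)] _ yP] by blast
      moreover have "(1 - e) - y = u" using eu(2) xy(3) by (simp add: algebra_simps)
      ultimately show False using full_notin[OF eu(1) P(1)] by simp
    qed
  qed
  ultimately show "\<exists>C1 C2. J_clopen C1 \<and> J_clopen C2 \<and> C1 \<inter> C2 = {} \<and> A \<subseteq> C1 \<and> B \<subseteq> C2"
    by blast
qed

lemma bwd:
  assumes sz: "J_spec_strongly_zero_dim TYPE('a::ring_1)"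
  shows "feckly_clean TYPE('a)"
  unfolding feckly_clean_def
proof
  fix a :: 'a
  define A where "A = {P \<in> J_spec. a \<in> P}"
  define B where "B = {P \<in> J_spec. 1 - a \<in> P}"
  have "A \<inter> B = {}"
  proof (rule ccontr)
    assume "A \<inter> B \<noteq> {}"
    then obtain P where P: "P \<in> J_spec" "a \<in> P" "1 - a \<in> P" unfolding A_def B_def by blast
    then have "a + (1 - a) \<in> P" using li_add[OF Jspec_li[OF P(1)]] by blast
    then show False using Jspec_one[OF P(1)] by simp
  qed
  moreover have "J_closed A" "J_closed B" unfolding A_def B_def by (rule closed_single)+
  ultimately obtain C1 C2 where C: "J_clopen C1" "J_clopen C2" "C1 \<inter> C2 = {}" "A \<subseteq> C1" "B \<subseteq> C2"
    using sz unfolding J_spec_strongly_zero_dim_def by blast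
  obtain I1 L1 where I1: "ideal I1" "C1 = W I1" and L1: "ideal L1" "J_spec - C1 = W L1"
    and C1J: "C1 \<subseteq> J_spec"
    using C(1) unfolding J_clopen_def J_closed_def by blast
  have "\<forall>P\<in>J_spec. \<not> (I1 \<subseteq> P \<and> L1 \<subseteq> P)"
  proof (intro ballI notI)
    fix P assume P: "P \<in> J_spec" "I1 \<subseteq> P \<and> L1 \<subseteq> P"
    then have "P \<in> C1" "P \<in> J_spec - C1" using I1 L1 unfolding W_def by blast+
    then show False by blast
  qed
  then obtain i l where il: "i \<in> I1" "l \<in> L1" "1 = i + l" using sum_one_ideal[OF I1(1) L1(1)] by blast
  have inC1: "1 - l \<in> P" if "P \<in> C1" for P
  proof -
    have "I1 \<subseteq> P" using that I1 unfolding W_def by blast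
    then have "i \<in> P" using il by blast
    moreover have "i = 1 - l" using il(3) by (simp add: algebra_simps)
    ultimately show ?thesis by simp
  qed
  have notC1: "l \<in> P" if "P \<in> J_spec" "P \<notin> C1" for P
  proof -
    have "P \<in> W L1" using that L1 by blast
    then show ?thesis using il unfolding W_def by blast
  qed
  have full: "full (a - l)" unfolding full_def
  proof (rule ccontr)
    assume "gen_ideal {a - l} \<noteq> UNIV"
    then have "1 \<notin> gen_ideal {a - l}" using id_one gen_ideal_ideal by blast
    then obtain P where P: "P \<in> J_spec" "gen_ideal {a - l} \<subseteq> P" using KL gen_ideal_ideal by blast
    have uP: "a - l \<in> P" using P(2) gen_ideal_incl by blast
    have LP: "left_ideal P" using Jspec_li[OF P(1)] .
    show False
    proof (cases "P \<in> C1")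
      case True
      then have "1 - l \<in> P" using inC1 by blast
      then have "(1 - l) - (a - l) \<in> P" using li_diff[OF LP _ uP] by blast
      then have "1 - a \<in> P" by simp
      then have "P \<in> B" unfolding B_def using P(1) by blast
      then show False using C True by blast
    next
      case False
      then have "l \<in> P" using notC1 P(1) by blast
      then have "(a - l) + l \<in> P" using li_add[OF LP uP] by blast
      then have "a \<in> P" by simp
      then have "P \<in> A" unfolding A_def using P(1) by blast
      then show False using C False by blast
    qed
  qed
  have idem: "l * r * (1 - l) \<in> jacobson" for r
  proof (rule JL, intro ballI)
    fix P :: "'a set" assume P: "P \<in> J_spec"
    show "l * r * (1 - l) \<in> P"
    proof (cases "P \<in> C1")
      case True
      then show ?thesis using inC1 li_mult[OF Jspec_li[OF P]] by blast
    next
      case False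
      then have "l \<in> P" using notC1 P by blast
      then have "l * (r * (1 - l)) \<in> P" using id_multR[OF Jspec_ideal[OF P]] by blast
      then show ?thesis by (simp add: mult.assoc)
    qed
  qed
  show "feckly_clean_elem a" unfolding feckly_clean_elem_def
  proof (intro exI conjI allI)
    show "full (a - l)" by (rule full)
    show "a = l + (a - l)" by simp
    fix r show "l * r * (1 - l) \<in> jacobson" by (rule idem)
  qed
qed

theorem theorem3p3:
  "feckly_clean TYPE('a::ring_1) \<longleftrightarrow> J_spec_strongly_zero_dim TYPE('a)"
  using fwd bwd by blast

end
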